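(* Let $\Pi$ be a Hermitian kernel on $\mathbb R\times\mathbb R$, smooth in both variables, inducing a locally trace-class orthogonal projection on $L_2(\mathbb R)$, with determinantal point process $\mathbb P_\Pi$, and suppose there is $C_0>0$ such that for all $k$ $$\sup_{x,y\in\mathbb R,\ |x-y|\leq1}\left|\frac{\partial^k}{\partial y^k}\Pi(x,y)\right|\leq C_0^k\,k!.$$ Then for any interval $I$ of length $|I|<(1+2C_0)^{-1}$ and any natural $k$, $$\mathbb P_\Pi(\#_I\geq k)\leq\big((1+2C_0)|I|\big)^{k(k+1)/2}.$$
   Context: $\#_I(X)$ is the number of points of a configuration $X$ (locally finite subset of $\mathbb R$) lying in $I$. $\mathbb P_\Pi$ is the determinantal point process with kernel $\Pi$ with respect to Lebesgue measure: its $l$-point correlation functions are $\det(\Pi(x_i,x_j))_{i,j=1}^l$. *)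

theory Defs
  imports "HOL-Analysis.Analysis" "HOL-Probability.Probability"
begin

coinductive smooth_map :: "('a::real_normed_vector \<Rightarrow> 'b::real_normed_vector) \<Rightarrow> bool" where
  "(\<forall>x. f differentiable (at x)) \<Longrightarrow>
   (\<forall>v. smooth_map (\<lambda>x. frechet_derivative f (at x) v)) \<Longrightarrow> smooth_map f"

fun ydiff :: "nat \<Rightarrow> (real \<Rightarrow> real \<Rightarrow> complex) \<Rightarrow> real \<Rightarrow> real \<Rightarrow> complex" where
  "ydiff 0 K x y = K x y"
| "ydiff (Suc k) K x y = vector_derivative (\<lambda>t. ydiff k K x t) (at y)"

definition count_in :: "real set \<Rightarrow> real set \<Rightarrow> nat" where
  "count_in I X = card (X \<inter> I)"

definition kdet :: "(real \<Rightarrow> real \<Rightarrow> complex) \<Rightarrow> nat \<Rightarrow> (nat \<Rightarrow> real) \<Rightarrow> complex" where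
  "kdet K l x = (\<Sum>p | p permutes {..<l}. of_int (sign p) * (\<Prod>i<l. K (x i) (x (p i))))"

text \<open>Hermitian kernel inducing an orthogonal projection on L2(R) (rows in L2,
  Hermitian symmetry, and the reproducing identity K o K = K).\<close>
definition projection_kernel :: "(real \<Rightarrow> real \<Rightarrow> complex) \<Rightarrow> bool" where
  "projection_kernel K \<longleftrightarrow>
     (\<forall>x y. K y x = cnj (K x y)) \<and>
     (\<forall>x. (\<lambda>z. K x z) \<in> borel_measurable lborel \<and> integrable lborel (\<lambda>z. (cmod (K x z))\<^sup>2)) \<and>
     (\<forall>x y. (LINT z|lborel. K x z * K z y) = K x y)"

text \<open>A random configuration X on the probability space M (locally finite subsets of R,
  with measurable counting functions) whose l-point correlation functions are
  det(K(x_i,x_j)) w.r.t. Lebesgue measure.\<close>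
definition determinantal :: "'w measure \<Rightarrow> ('w \<Rightarrow> real set) \<Rightarrow> (real \<Rightarrow> real \<Rightarrow> complex) \<Rightarrow> bool" where
  "determinantal M X K \<longleftrightarrow>
     prob_space M \<and>
     (\<forall>\<omega>\<in>space M. \<forall>B. bounded B \<longrightarrow> finite (X \<omega> \<inter> B)) \<and>
     (\<forall>B\<in>sets borel. bounded B \<longrightarrow> (\<lambda>\<omega>. count_in B (X \<omega>)) \<in> measurable M (count_space UNIV)) \<and>
     (\<forall>l\<ge>1. \<forall>f \<in> borel_measurable (PiM {..<l} (\<lambda>_. lborel)).
        (\<integral>\<^sup>+\<omega>. (\<integral>\<^sup>+t. f t \<partial>count_space {t \<in> {..<l} \<rightarrow>\<^sub>E X \<omega>. inj_on t {..<l}}) \<partial>M)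
        = (\<integral>\<^sup>+x. f x * ennreal (Re (kdet K l x)) \<partial>PiM {..<l} (\<lambda>_. lborel)))"

end

theory Submission
  imports Defs
begin


definition mdet :: "(nat \<Rightarrow> nat \<Rightarrow> complex) \<Rightarrow> nat \<Rightarrow> complex" where
  "mdet A k = (\<Sum>p | p permutes {..<k}. of_int (sign p) * (\<Prod>i<k. A i (p i)))"

lemma mdet_cong:
  assumes "\<And>i j. i < k \<Longrightarrow> j < k \<Longrightarrow> A i j = B i j"
  shows "mdet A k = mdet B k"
  unfolding mdet_def
proof (rule sum.cong[OF refl])
  fix p assume "p \<in> {p. p permutes {..<k}}"
  then have p: "p permutes {..<k}" by simp
  show "of_int (sign p) * (\<Prod>i<k. A i (p i)) = of_int (sign p) * (\<Prod>i<k. B i (p i))"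
    using assms permutes_in_image[OF p] by (intro arg_cong2[where f="(*)"] prod.cong) auto
qed

lemma mdet_identical_cols:
  assumes j1: "j1 < k" and j2: "j2 < k" and ne: "j1 \<noteq> j2"
    and eq: "\<And>i. i < k \<Longrightarrow> A i j1 = A i j2"
  shows "mdet A k = 0"
proof -
  let ?t = "Transposition.transpose j1 j2"
  let ?f = "\<lambda>p. of_int (sign p) * (\<Prod>i<k. A i (p i)) :: complex"
  have tp: "?t permutes {..<k}" using j1 j2 by (intro permutes_swap_id) auto
  have "mdet A k = (\<Sum>p | p permutes {..<k}. ?f (?t \<circ> p))"
    unfolding mdet_def by (rule setum_permutations_compose_left[OF tp])
  also have "\<dots> = (\<Sum>p | p permutes {..<k}. - ?f p)"
  proof (rule sum.cong[OF refl])
    fix p assume "p \<in> {p. p permutes {..<k}}"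
    then have p: "p permutes {..<k}" by simp
    have s: "sign (?t \<circ> p) = - sign p"
    proof -
      have "permutation ?t" "permutation p" using tp p by (auto simp: permutation_permutes)
      then have "sign (?t \<circ> p) = sign ?t * sign p" by (rule sign_compose)
      then show ?thesis using sign_swap_id[of j1 j2] ne by simp
    qed
    have "(\<Prod>i<k. A i ((?t \<circ> p) i)) = (\<Prod>i<k. A i (p i))"
    proof (rule prod.cong[OF refl])
      fix i assume i: "i \<in> {..<k}"
      show "A i ((?t \<circ> p) i) = A i (p i)"
        using eq[of i] i by (auto simp: Transposition.transpose_def)
    qed
    then show "?f (?t \<circ> p) = - ?f p" using s by simp
  qed
  also have "\<dots> = - mdet A k" unfolding mdet_def by (simp add: sum_negf)
  finally show ?thesis by simp
qed

lemma mdet_bound: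
  assumes "\<And>i j. i < k \<Longrightarrow> j < k \<Longrightarrow> cmod (A i j) \<le> b j"
  shows "cmod (mdet A k) \<le> fact k * (\<Prod>j<k. b j)"
proof -
  have "cmod (mdet A k) \<le> (\<Sum>p | p permutes {..<k}. cmod (of_int (sign p) * (\<Prod>i<k. A i (p i))))"
    unfolding mdet_def by (rule norm_sum)
  also have "\<dots> \<le> (\<Sum>p | p permutes {..<k}. (\<Prod>j<k. b j))"
  proof (rule sum_mono)
    fix p assume "p \<in> {p. p permutes {..<k}}"
    then have p: "p permutes {..<k}" by simp
    have "cmod (of_int (sign p) * (\<Prod>i<k. A i (p i))) = (\<Prod>i<k. cmod (A i (p i)))"
      by (simp add: norm_mult prod_norm sign_def)
    also have "\<dots> \<le> (\<Prod>i<k. b (p i))"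
      using assms permutes_in_image[OF p] by (intro prod_mono) auto
    also have "\<dots> = (\<Prod>j<k. b j)"
      using prod.permute[OF p, of b] by (simp add: comp_def)
    finally show "cmod (of_int (sign p) * (\<Prod>i<k. A i (p i))) \<le> (\<Prod>j<k. b j)" .
  qed
  also have "\<dots> = fact k * (\<Prod>j<k. b j)"
    using card_permutations[of "{..<k}" k] by simp
  finally show ?thesis .
qed

lemma mdet_col:
  assumes j: "j < k"
  shows "mdet (\<lambda>i l. if l = j then v i else A i l) k =
    (\<Sum>p | p permutes {..<k}. (of_int (sign p) * (\<Prod>i\<in>{..<k} - {inv p j}. A i (p i))) * v (inv p j))"
  unfolding mdet_def
proof (rule sum.cong[OF refl])
  fix p assume "p \<in> {p. p permutes {..<k}}"
  then have p: "p permutes {..<k}" by simp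
  let ?i0 = "inv p j"
  have i0: "?i0 \<in> {..<k}" using permutes_in_image[OF permutes_inv[OF p]] j by simp
  have pi0: "p ?i0 = j" using permutes_inverses(1)[OF p] by simp
  have "(\<Prod>i<k. (if p i = j then v i else A i (p i))) =
     (if p ?i0 = j then v ?i0 else A ?i0 (p ?i0)) * (\<Prod>i\<in>{..<k} - {?i0}. (if p i = j then v i else A i (p i)))"
    using prod.remove[OF _ i0, of "\<lambda>i. if p i = j then v i else A i (p i)"] by simp
  also have "(\<Prod>i\<in>{..<k} - {?i0}. (if p i = j then v i else A i (p i))) = (\<Prod>i\<in>{..<k} - {?i0}. A i (p i))"
  proof (rule prod.cong[OF refl])
    fix i assume "i \<in> {..<k} - {?i0}"
    then have "p i \<noteq> j" using permutes_inverses(2)[OF p, of i] by auto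
    then show "(if p i = j then v i else A i (p i)) = A i (p i)" by simp
  qed
  finally show "of_int (sign p) * (\<Prod>i<k. (if p i = j then v i else A i (p i))) =
    of_int (sign p) * (\<Prod>i\<in>{..<k} - {inv p j}. A i (p i)) * v (inv p j)"
    using pi0 by simp
qed

lemma mdet_col_deriv:
  assumes j: "j < k" and d: "\<And>i. ((\<lambda>t. v i t) has_vector_derivative v' i) (at t)"
  shows "((\<lambda>t. mdet (\<lambda>i l. if l = j then v i t else A i l) k) has_vector_derivative
          mdet (\<lambda>i l. if l = j then v' i else A i l) k) (at t)"
  unfolding mdet_col[OF j]
  by (intro has_vector_derivative_sum has_vector_derivative_mult_right d)



lemma iter_rolle:
  fixes f :: "nat \<Rightarrow> real \<Rightarrow> real"
  assumes "\<And>j t. (f j has_real_derivative f (Suc j) t) (at t)"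
    and "is_interval J" and "finite S" and "card S = Suc n" and "S \<subseteq> J"
    and "\<And>s. s \<in> S \<Longrightarrow> f 0 s = 0"
  shows "\<exists>\<xi>\<in>J. f n \<xi> = 0"
  using assms
proof (induction n arbitrary: f S)
  case 0
  then obtain s where "S = {s}" by (auto simp: card_Suc_eq)
  then show ?case using 0 by auto
next
  case (Suc n)
  define s where "s = sorted_list_of_set S"
  have len: "length s = Suc (Suc n)" using Suc.prems by (simp add: s_def)
  have sw: "sorted_wrt (<) s" by (simp add: s_def)
  have sS: "set s = S" using Suc.prems by (simp add: s_def)
  have lt: "s ! i < s ! i'" if "i < i'" "i' < Suc (Suc n)" for i i'
    using sw that len by (simp add: sorted_wrt_iff_nth_less)
  have inJ: "s ! i \<in> J" if "i < Suc (Suc n)" for i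
    using that len sS Suc.prems(5) nth_mem by (metis subsetD)
  have zero: "f 0 (s ! i) = 0" if "i < Suc (Suc n)" for i
    using that len sS Suc.prems(6) nth_mem by metis
  have "\<exists>r. s ! i < r \<and> r < s ! Suc i \<and> f 1 r = 0" if i: "i < Suc n" for i
  proof -
    have a: "s ! i < s ! Suc i" using lt i by simp
    have "continuous_on {s ! i..s ! Suc i} (f 0)"
      using Suc.prems(1) by (meson DERIV_isCont continuous_at_imp_continuous_on)
    moreover have "\<And>x. (f 0 has_derivative (*) (f 1 x)) (at x)"
      using Suc.prems(1)[of 0] by (simp add: has_field_derivative_def)
    ultimately obtain z where z: "s ! i < z" "z < s ! Suc i" "(*) (f 1 z) = (\<lambda>v. 0)"
      using Rolle_deriv[OF a, of "f 0" "\<lambda>x. (*) (f 1 x)"] zero i by auto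
    then have "f 1 z = 0" by (metis mult_1_right)
    then show ?thesis using z by blast
  qed
  then obtain r where r: "\<And>i. i < Suc n \<Longrightarrow> s ! i < r i \<and> r i < s ! Suc i \<and> f 1 (r i) = 0"
    by metis
  have mono: "r i < r i'" if "i < i'" "i' < Suc n" for i i'
  proof -
    have "r i < s ! Suc i" using r that by auto
    also have "s ! Suc i \<le> s ! i'" using lt[of "Suc i" i'] that by (cases "Suc i = i'") auto
    also have "\<dots> < r i'" using r that by auto
    finally show ?thesis .
  qed
  have inj: "inj_on r {..<Suc n}"
    by (rule inj_onI) (metis lessThan_iff linorder_neqE_nat mono order_less_irrefl)
  define S' where "S' = r ` {..<Suc n}"
  have cS': "card S' = Suc n" using card_image[OF inj] by (simp add: S'_def)
  have S'J: "S' \<subseteq> J"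
  proof
    fix x assume "x \<in> S'"
    then obtain i where i: "i < Suc n" "x = r i" by (auto simp: S'_def)
    show "x \<in> J"
      using mem_is_interval_1_I[OF Suc.prems(2) inJ[of i] inJ[of "Suc i"]] r[OF i(1)] i
      by auto
  qed
  have "\<exists>\<xi>\<in>J. (\<lambda>j. f (Suc j)) n \<xi> = 0"
    by (rule Suc.IH[of "\<lambda>j. f (Suc j)" S'])
      (use Suc.prems cS' S'J r in \<open>auto simp: S'_def\<close>)
  then show ?case by simp
qed

lemma higher_pderiv_deg:
  fixes p :: "real poly"
  assumes "degree p = n"
  shows "(pderiv ^^ n) p = [:fact n * lead_coeff p:]"
proof -
  have "degree ((pderiv ^^ n) p) = 0" using assms by (simp add: degree_higher_pderiv)
  then have "(pderiv ^^ n) p = [:coeff ((pderiv ^^ n) p) 0:]" by (metis degree_0_id)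
  also have "coeff ((pderiv ^^ n) p) 0 = fact n * lead_coeff p"
    using assms by (simp add: coeff_higher_pderiv pochhammer_fact)
  finally show ?thesis .
qed

lemma interp_bound:
  fixes f :: "nat \<Rightarrow> real \<Rightarrow> real"
  assumes d: "\<And>j t. (f j has_real_derivative f (Suc j) t) (at t)"
    and J: "is_interval J" and Z: "finite Z" "card Z = n" "Z \<subseteq> J"
    and zero: "\<And>z. z \<in> Z \<Longrightarrow> f 0 z = 0"
    and B: "\<And>t. t \<in> J \<Longrightarrow> \<bar>f n t\<bar> \<le> B"
    and y: "y \<in> J"
  shows "\<bar>f 0 y\<bar> * fact n \<le> B * (\<Prod>z\<in>Z. \<bar>y - z\<bar>)"
proof (cases "y \<in> Z")
  case True
  have "B \<ge> 0" using B[OF y] by linarith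
  then show ?thesis using zero[OF True] by (simp add: prod_nonneg)
next
  case False
  define w where "w = (\<Prod>z\<in>Z. [:-z, 1:])"
  have wy: "poly w t = (\<Prod>z\<in>Z. t - z)" for t by (simp add: w_def poly_prod)
  have w0: "poly w y \<noteq> 0" using False Z unfolding wy by auto
  have degw: "degree w = n" unfolding w_def using Z
    by (subst degree_prod_eq_sum_degree) auto
  have lcw: "lead_coeff w = 1" unfolding w_def by (simp add: lead_coeff_prod)
  define c where "c = f 0 y / poly w y"
  define g where "g = (\<lambda>j t. f j t - c * poly ((pderiv ^^ j) w) t)"
  have dg: "(g j has_real_derivative g (Suc j) t) (at t)" for j t
    unfolding g_def by (auto intro!: derivative_eq_intros d simp: poly_DERIV)
  have "\<exists>\<xi>\<in>J. g n \<xi> = 0"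
  proof (rule iter_rolle[where f=g and J=J and S="insert y Z" and n=n])
    show "(g j has_real_derivative g (Suc j) t) (at t)" for j t by (rule dg)
    show "is_interval J" by (rule J)
    show "finite (insert y Z)" "card (insert y Z) = Suc n" "insert y Z \<subseteq> J"
      using Z False y by auto
    fix s assume "s \<in> insert y Z"
    then show "g 0 s = 0"
    proof
      assume "s = y" then show ?thesis using w0 by (simp add: g_def c_def)
    next
      assume "s \<in> Z" then show ?thesis using zero[of s] Z by (simp add: g_def wy)
    qed
  qed
  then obtain \<xi> where \<xi>: "\<xi> \<in> J" "g n \<xi> = 0" by blast
  have "f n \<xi> = c * fact n"
    using \<xi>(2) unfolding g_def higher_pderiv_deg[OF degw] lcw by simp
  then have "f 0 y * fact n = f n \<xi> * poly w y" using w0 by (simp add: c_def)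
  then have "\<bar>f 0 y\<bar> * fact n = \<bar>f n \<xi>\<bar> * \<bar>poly w y\<bar>" by (metis abs_mult abs_of_nonneg fact_ge_zero)
  also have "\<dots> \<le> B * \<bar>poly w y\<bar>" using B[OF \<xi>(1)] by (simp add: mult_right_mono)
  finally show ?thesis by (simp add: wy abs_prod)
qed



lemma ydiff_deriv:
  assumes sm: "smooth_map (\<lambda>p::real \<times> real. K (fst p) (snd p))"
  shows "((\<lambda>t. ydiff n K x t) has_vector_derivative ydiff (Suc n) K x t) (at t)"
proof -
  define D :: "nat \<Rightarrow> real \<times> real \<Rightarrow> complex" where
    "D = rec_nat (\<lambda>p. K (fst p) (snd p)) (\<lambda>n Dn p. frechet_derivative Dn (at p) (0,1))"
  have D0: "D 0 = (\<lambda>p. K (fst p) (snd p))" by (simp add: D_def)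
  have DS: "D (Suc n) = (\<lambda>p. frechet_derivative (D n) (at p) (0,1))" for n by (simp add: D_def)
  have smD: "smooth_map (D n)" for n
  proof (induction n)
    case 0 then show ?case using sm by (simp add: D0)
  next
    case (Suc n)
    then show ?case unfolding DS by (cases rule: smooth_map.cases) auto
  qed
  have der: "((\<lambda>t. D n (x,t)) has_vector_derivative D (Suc n) (x,t)) (at t)" for n t
  proof -
    have "D n differentiable (at (x,t))" using smD[of n] by (cases rule: smooth_map.cases) auto
    then have d1: "(D n has_derivative frechet_derivative (D n) (at (x,t))) (at (x,t))"
      by (simp add: frechet_derivative_works)
    have d2: "((\<lambda>s. (x, s)) has_derivative (\<lambda>h. (0, h))) (at t)"
      by (intro has_derivative_Pair has_derivative_const has_derivative_ident)
    have "((\<lambda>s. D n (x, s)) has_derivative (\<lambda>h. frechet_derivative (D n) (at (x,t)) (0, h))) (at t)"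
      using has_derivative_compose[OF d2, of "D n"] d1 by (simp add: comp_def)
    moreover have "frechet_derivative (D n) (at (x,t)) (0, h) = h *\<^sub>R D (Suc n) (x,t)" for h
    proof -
      have bl: "bounded_linear (frechet_derivative (D n) (at (x,t)))"
        using d1 by (rule has_derivative_bounded_linear)
      have "(0::real, h) = h *\<^sub>R (0, 1)" by simp
      then show ?thesis using linear_simps(5)[OF bl, of h "(0,1)"] by (simp add: DS)
    qed
    ultimately show ?thesis by (simp add: has_vector_derivative_def)
  qed
  have eq: "ydiff n K x = (\<lambda>t. D n (x,t))" for n
  proof (induction n)
    case 0 then show ?case by (simp add: D0)
  next
    case (Suc n)
    show ?case
    proof
      fix y
      show "ydiff (Suc n) K x y = D (Suc n) (x, y)"
        using Suc vector_derivative_at[OF der[of n y]] by simp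
    qed
  qed
  show ?thesis using der[of n t] by (simp add: eq)
qed



lemma kdet_bound:
  fixes K :: "real \<Rightarrow> real \<Rightarrow> complex"
  assumes sm: "smooth_map (\<lambda>p::real \<times> real. K (fst p) (snd p))"
    and C0: "C0 > 0"
    and hyp: "\<And>n x y. \<bar>x - y\<bar> \<le> 1 \<Longrightarrow> cmod (ydiff n K x y) \<le> C0 ^ n * fact n"
    and J: "is_interval J" and L: "0 \<le> L" "L \<le> 1" and diam: "\<And>a b. a \<in> J \<Longrightarrow> b \<in> J \<Longrightarrow> \<bar>a - b\<bar> \<le> L"
    and xs: "\<And>i. i < k \<Longrightarrow> xs i \<in> J"
  shows "cmod (kdet K k xs) \<le> fact k * (\<Prod>j<k. (C0 * L) ^ j)"
proof -
  define Mm where "Mm = (\<lambda>m y \<xi> i j. if j < m then K (xs i) (y j) else ydiff j K (xs i) (\<xi> j))"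
  define Bnd where "Bnd = (\<lambda>m. fact k * (\<Prod>j<m. (C0 * L) ^ j) * (\<Prod>j\<in>{m..<k}. C0 ^ j * fact j))"
  have Bnd_nonneg: "Bnd m \<ge> 0" for m
    unfolding Bnd_def using C0 L by (intro mult_nonneg_nonneg prod_nonneg) auto
  have main: "m \<le> k \<Longrightarrow> (\<forall>j<k. y j \<in> J) \<Longrightarrow> (\<forall>j<k. \<xi> j \<in> J) \<Longrightarrow>
      cmod (mdet (Mm m y \<xi>) k) \<le> Bnd m" for m y \<xi>
  proof (induction m arbitrary: y \<xi>)
    case 0
    have "cmod (mdet (Mm 0 y \<xi>) k) \<le> fact k * (\<Prod>j<k. C0 ^ j * fact j)"
    proof (rule mdet_bound)
      fix i j assume i: "i < k" and j: "j < k"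
      have "\<bar>xs i - \<xi> j\<bar> \<le> 1" using diam[OF xs[OF i]] 0 j L by force
      then show "cmod (Mm 0 y \<xi> i j) \<le> C0 ^ j * fact j" by (simp add: Mm_def hyp)
    qed
    then show ?case by (simp add: Bnd_def atLeast0LessThan)
  next
    case (Suc m)
    have mk: "m < k" using Suc.prems by simp
    let ?A = "Mm (Suc m) y \<xi>"
    show ?case
    proof (cases "inj_on y {..<m}")
      case False
      then obtain j1 j2 where jj: "j1 < m" "j2 < m" "j1 \<noteq> j2" "y j1 = y j2"
        by (auto simp: inj_on_def)
      have "mdet ?A k = 0"
        by (rule mdet_identical_cols[of j1 k j2]) (use jj mk in \<open>auto simp: Mm_def\<close>)
      then show ?thesis using Bnd_nonneg by simp
    next
      case True
      define G where "G = (\<lambda>n t. mdet (\<lambda>i l. if l = m then ydiff n K (xs i) t else ?A i l) k)"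
      have G0: "G 0 (y m) = mdet ?A k"
        unfolding G_def by (rule mdet_cong) (auto simp: Mm_def)
      have Gm: "cmod (G m t) \<le> Bnd m" if t: "t \<in> J" for t
      proof -
        have "G m t = mdet (Mm m y (\<xi>(m := t))) k"
          unfolding G_def by (rule mdet_cong) (auto simp: Mm_def)
        also have "cmod \<dots> \<le> Bnd m"
        proof -
          have "\<forall>j<k. (\<xi>(m := t)) j \<in> J" using Suc.prems t by auto
          then show ?thesis using Suc.IH[of y "\<xi>(m := t)"] Suc.prems by (simp add: fun_upd_def)
        qed
        finally show ?thesis .
      qed
      have Gz: "G 0 (y j) = 0" if j: "j < m" for j
        unfolding G_def by (rule mdet_identical_cols[of j k m]) (use j mk in \<open>auto simp: Mm_def\<close>)
      have Gd: "(G n has_vector_derivative G (Suc n) t) (at t)" for n t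
        unfolding G_def
        by (rule mdet_col_deriv[OF mk, of "\<lambda>i t. ydiff n K (xs i) t"]) (rule ydiff_deriv[OF sm])
      define z where "z = G 0 (y m)"
      define u where "u = (if z = 0 then 1 else cnj z / complex_of_real (cmod z))"
      have u1: "cmod u \<le> 1" by (simp add: u_def norm_divide)
      have uz: "Re (u * z) = cmod z"
      proof (cases "z = 0")
        case False
        have "u * z = (z * cnj z) / complex_of_real (cmod z)" by (simp add: u_def False mult.commute)
        also have "\<dots> = complex_of_real (cmod z)"
          using False by (simp add: complex_norm_square[symmetric] power2_eq_square)
        finally show ?thesis by simp
      qed (simp add: u_def)
      define f where "f = (\<lambda>n t. Re (u * G n t))"
      have fd: "(f n has_real_derivative f (Suc n) t) (at t)" for n t
        unfolding f_def by (intro has_field_derivative_Re has_vector_derivative_mult_right Gd)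
      have fB: "\<bar>f m t\<bar> \<le> Bnd m" if "t \<in> J" for t
      proof -
        have "\<bar>f m t\<bar> \<le> cmod (u * G m t)" unfolding f_def by (rule abs_Re_le_cmod)
        also have "\<dots> \<le> cmod (G m t)" using u1 by (simp add: norm_mult mult_left_le_one_le)
        also have "\<dots> \<le> Bnd m" using Gm that by simp
        finally show ?thesis .
      qed
      have ZJ: "y ` {..<m} \<subseteq> J" using Suc.prems mk by auto
      have ymJ: "y m \<in> J" using Suc.prems mk by auto
      have "\<bar>f 0 (y m)\<bar> * fact m \<le> Bnd m * (\<Prod>w\<in>y ` {..<m}. \<bar>y m - w\<bar>)"
        by (rule interp_bound[OF fd J _ _ ZJ _ fB ymJ])
          (use True Gz in \<open>auto simp: card_image f_def\<close>)
      also have "(\<Prod>w\<in>y ` {..<m}. \<bar>y m - w\<bar>) \<le> (\<Prod>w\<in>y ` {..<m}. L)"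
        by (rule prod_mono) (use ZJ ymJ diam in auto)
      also have "\<dots> = L ^ m" using True by (simp add: card_image)
      finally have ineq: "cmod (mdet ?A k) * fact m \<le> Bnd m * L ^ m"
        using Bnd_nonneg[of m] uz by (simp add: f_def z_def G0 mult_left_mono)
      have "Bnd m * L ^ m = Bnd (Suc m) * fact m"
        unfolding Bnd_def using prod.atLeast_Suc_lessThan[OF mk, of "\<lambda>j. C0 ^ j * fact j"]
        by (simp add: power_mult_distrib algebra_simps)
      with ineq have "cmod (mdet ?A k) * fact m \<le> Bnd (Suc m) * fact m" by simp
      then show ?thesis by (simp add: mult_le_cancel_right)
    qed
  qed
  have "kdet K k xs = mdet (Mm k xs xs) k"
    unfolding kdet_def mdet_def
    by (rule sum.cong[OF refl], rule arg_cong2[where f="(*)"], simp, rule prod.cong[OF refl])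
       (auto simp: Mm_def dest: permutes_in_image)
  also have "cmod \<dots> \<le> Bnd k" using main[of k xs xs] xs by auto
  finally show ?thesis by (simp add: Bnd_def)
qed



lemma final_arith:
  fixes C0 L :: real
  assumes C0: "C0 \<ge> 0" and L: "L \<ge> 0"
  shows "fact k * (\<Prod>j<k. (C0 * L) ^ j) * L ^ k \<le> ((1 + 2 * C0) * L) ^ (k * (k + 1) div 2)"
proof (induction k)
  case 0 then show ?case by simp
next
  case (Suc k)
  have e: "Suc k * (Suc k + 1) div 2 = k * (k + 1) div 2 + Suc k" by simp
  have pk: "real (Suc k) \<le> 2 ^ k"
  proof -
    have "Suc k \<le> 2 ^ k" by (induction k) auto
    then show ?thesis by (metis of_nat_le_iff of_nat_numeral of_nat_power)
  qed
  have "real (Suc k) * C0 ^ k \<le> 2 ^ k * C0 ^ k" using pk C0 by (simp add: mult_right_mono)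
  also have "\<dots> = (2 * C0) ^ k" by (simp add: power_mult_distrib)
  also have "\<dots> \<le> (1 + 2 * C0) ^ k" using C0 by (intro power_mono) auto
  also have "\<dots> \<le> (1 + 2 * C0) ^ Suc k" using C0 by (intro power_increasing) auto
  finally have t: "real (Suc k) * C0 ^ k \<le> (1 + 2 * C0) ^ Suc k" .
  have step: "real (Suc k) * (C0 * L) ^ k * L \<le> ((1 + 2 * C0) * L) ^ Suc k"
  proof -
    have "real (Suc k) * (C0 * L) ^ k * L = (real (Suc k) * C0 ^ k) * L ^ Suc k"
      by (simp add: power_mult_distrib)
    also have "\<dots> \<le> (1 + 2 * C0) ^ Suc k * L ^ Suc k" using t L by (intro mult_right_mono) auto
    also have "\<dots> = ((1 + 2 * C0) * L) ^ Suc k" by (simp add: power_mult_distrib)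
    finally show ?thesis .
  qed
  have "fact (Suc k) * (\<Prod>j<Suc k. (C0 * L) ^ j) * L ^ Suc k =
      (fact k * (\<Prod>j<k. (C0 * L) ^ j) * L ^ k) * (real (Suc k) * (C0 * L) ^ k * L)"
    by (simp add: algebra_simps)
  also have "\<dots> \<le> ((1 + 2 * C0) * L) ^ (k * (k + 1) div 2) * ((1 + 2 * C0) * L) ^ Suc k"
    using Suc.IH step C0 L by (intro mult_mono) auto
  also have "\<dots> = ((1 + 2 * C0) * L) ^ (Suc k * (Suc k + 1) div 2)"
    by (simp only: e power_add)
  finally show ?case .
qed



theorem lemma4p2:
  fixes K :: "real \<Rightarrow> real \<Rightarrow> complex"
    and M :: "'w measure" and X :: "'w \<Rightarrow> real set"
    and C0 :: real and I :: "real set" and k :: nat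
  assumes "smooth_map (\<lambda>p::real \<times> real. K (fst p) (snd p))"
    and "projection_kernel K"
    and "determinantal M X K"
    and "C0 > 0"
    and "\<And>n x y. \<bar>x - y\<bar> \<le> 1 \<Longrightarrow> cmod (ydiff n K x y) \<le> C0 ^ n * fact n"
    and "is_interval I" and "bounded I"
    and "measure lborel I < 1 / (1 + 2 * C0)"
  shows "measure M {\<omega> \<in> space M. count_in I (X \<omega>) \<ge> k}
           \<le> ((1 + 2 * C0) * measure lborel I) ^ (k * (k + 1) div 2)"
proof -
  note sm = assms(1) and det = assms(3) and C0 = assms(4) and hyp = assms(5)
    and J = assms(6) and bI = assms(7) and LI = assms(8)
  define L where "L = measure lborel I"
  define A where "A = {\<omega> \<in> space M. count_in I (X \<omega>) \<ge> k}"
  have ps: "prob_space M" using det by (simp add: determinantal_def)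
  have Ib: "I \<in> sets lborel" using real_interval_borel_measurable[OF J] by simp
  have eI: "emeasure lborel I = ennreal L"
    unfolding L_def using emeasure_bounded_finite[OF bI] by (simp add: emeasure_eq_ennreal_measure)
  have L0: "L \<ge> 0" by (simp add: L_def)
  have L1: "L \<le> 1"
  proof -
    have "1 / (1 + 2 * C0) \<le> 1" using C0 by simp
    then show ?thesis using LI by (simp add: L_def)
  qed
  have diam: "\<bar>a - b\<bar> \<le> L" if a: "a \<in> I" and b: "b \<in> I" for a b
  proof -
    have "\<bar>a - b\<bar> = max a b - min a b" by auto
    have mi: "min a b \<in> I" "max a b \<in> I" using a b by (simp_all add: min_def max_def)
    have sub: "{min a b..max a b} \<subseteq> I"
    proof
      fix z assume "z \<in> {min a b..max a b}"
      then show "z \<in> I" using mem_is_interval_1_I[OF J mi] by simp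
    qed
    have "ennreal (max a b - min a b) = emeasure lborel {min a b..max a b}" by simp
    also have "\<dots> \<le> emeasure lborel I" using sub by (rule emeasure_mono) (rule Ib)
    finally have "ennreal (max a b - min a b) \<le> ennreal L" using eI by simp
    then have "max a b - min a b \<le> L" using L0 by (simp add: ennreal_le_iff)
    then show ?thesis by auto
  qed
  have RHS0: "0 \<le> ((1 + 2 * C0) * L) ^ (k * (k + 1) div 2)" using C0 L0 by simp
  show ?thesis
  proof (cases "k = 0")
    case True
    then show ?thesis using prob_space.prob_le_1[OF ps] by simp
  next
    case False
    then have k1: "k \<ge> 1" by simp
    show ?thesis
    proof (cases "A \<in> sets M")
      case False
      then show ?thesis using RHS0 by (simp add: A_def[symmetric] L_def[symmetric] measure_notin_sets)
    next
      case AM: True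
      define E where "E = PiE {..<k} (\<lambda>_. I)"
      define f :: "(nat \<Rightarrow> real) \<Rightarrow> ennreal" where "f = indicator E"
      define Bd where "Bd = fact k * (\<Prod>j<k. (C0 * L) ^ j)"
      have Bd0: "Bd \<ge> 0" unfolding Bd_def using C0 L0 by (intro mult_nonneg_nonneg prod_nonneg) auto
      have ES: "E \<in> sets (PiM {..<k} (\<lambda>_. lborel))"
        unfolding E_def by (rule sets_PiM_I_finite) (use Ib in auto)
      have fm: "f \<in> borel_measurable (PiM {..<k} (\<lambda>_. lborel))"
        unfolding f_def using ES by simp
      have deq: "(\<integral>\<^sup>+\<omega>. (\<integral>\<^sup>+t. f t \<partial>count_space {t \<in> {..<k} \<rightarrow>\<^sub>E X \<omega>. inj_on t {..<k}}) \<partial>M)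
        = (\<integral>\<^sup>+x. f x * ennreal (Re (kdet K k x)) \<partial>PiM {..<k} (\<lambda>_. lborel))"
        using det k1 fm unfolding determinantal_def by blast
      have "emeasure M A = (\<integral>\<^sup>+\<omega>. indicator A \<omega> \<partial>M)" using AM by simp
      also have "\<dots> \<le> (\<integral>\<^sup>+\<omega>. (\<integral>\<^sup>+t. f t \<partial>count_space {t \<in> {..<k} \<rightarrow>\<^sub>E X \<omega>. inj_on t {..<k}}) \<partial>M)"
      proof (rule nn_integral_mono)
        fix \<omega> assume \<omega>: "\<omega> \<in> space M"
        show "indicator A \<omega> \<le> (\<integral>\<^sup>+t. f t \<partial>count_space {t \<in> {..<k} \<rightarrow>\<^sub>E X \<omega>. inj_on t {..<k}})"
        proof (cases "\<omega> \<in> A")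
          case False then show ?thesis by simp
        next
          case True
          let ?T = "{t \<in> {..<k} \<rightarrow>\<^sub>E X \<omega>. inj_on t {..<k}}"
          have fin: "finite (X \<omega> \<inter> I)" using det \<omega> bI unfolding determinantal_def by blast
          have "k \<le> card (X \<omega> \<inter> I)" using True by (simp add: A_def count_in_def)
          then obtain S where S: "S \<subseteq> X \<omega> \<inter> I" "card S = k" "finite S"
            by (meson obtain_subset_with_card_n)
          obtain h where h: "bij_betw h {0..<card S} S" using ex_bij_betw_nat_finite[OF S(3)] by blast
          define t where "t = restrict h {..<k}"
          have tT: "t \<in> ?T"
            using h S unfolding t_def bij_betw_def
            by (auto simp: inj_on_def atLeast0LessThan PiE_def Pi_def extensional_def)
          have "t \<in> E"
            using h S unfolding t_def E_def bij_betw_def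
            by (auto simp: atLeast0LessThan restrict_PiE_iff)
          then have ft: "f t = 1" by (simp add: f_def)
          have "indicator A \<omega> = (\<integral>\<^sup>+s. indicator {t} s \<partial>count_space ?T)"
            using tT True by (simp add: emeasure_count_space_finite)
          also have "\<dots> \<le> (\<integral>\<^sup>+s. f s \<partial>count_space ?T)"
            by (rule nn_integral_mono) (auto simp: ft split: split_indicator)
          finally show ?thesis .
        qed
      qed
      also have "\<dots> = (\<integral>\<^sup>+x. f x * ennreal (Re (kdet K k x)) \<partial>PiM {..<k} (\<lambda>_. lborel))" by (rule deq)
      also have "\<dots> \<le> (\<integral>\<^sup>+x. ennreal Bd * indicator E x \<partial>PiM {..<k} (\<lambda>_. lborel))"
      proof (rule nn_integral_mono)
        fix x :: "nat \<Rightarrow> real"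
        show "f x * ennreal (Re (kdet K k x)) \<le> ennreal Bd * indicator E x"
        proof (cases "x \<in> E")
          case False then show ?thesis by (simp add: f_def)
        next
          case True
          have xs: "x i \<in> I" if "i < k" for i using True that by (auto simp: E_def)
          have "Re (kdet K k x) \<le> cmod (kdet K k x)" by (rule complex_Re_le_cmod)
          also have "\<dots> \<le> Bd" unfolding Bd_def
            by (rule kdet_bound[OF sm C0 hyp J L0 L1 diam xs]) auto
          finally show ?thesis using True by (simp add: f_def ennreal_leI)
        qed
      qed
      also have "\<dots> = ennreal Bd * emeasure (PiM {..<k} (\<lambda>_. lborel)) E"
        using ES by (simp add: nn_integral_cmult_indicator)
      also have "emeasure (PiM {..<k} (\<lambda>_. lborel)) E = (\<Prod>i<k. emeasure lborel I)"
        unfolding E_def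
        by (rule product_sigma_finite.emeasure_PiM)
           (use Ib in \<open>auto simp: product_sigma_finite_def lborel.sigma_finite_measure_axioms\<close>)
      also have "\<dots> = ennreal (L ^ k)" using eI L0 by (simp add: ennreal_power)
      finally have "emeasure M A \<le> ennreal (Bd * L ^ k)" using Bd0 L0 by (simp add: ennreal_mult)
      moreover have "emeasure M A \<noteq> \<top>"
        using prob_space.emeasure_le_1[OF ps, of A] by (auto simp: top_unique)
      ultimately have "measure M A \<le> Bd * L ^ k"
        using Bd0 L0 by (simp add: emeasure_eq_ennreal_measure ennreal_le_iff)
      also have "\<dots> \<le> ((1 + 2 * C0) * L) ^ (k * (k + 1) div 2)"
        unfolding Bd_def using final_arith[of C0 L k] C0 L0 by simp
      finally show ?thesis by (simp add: A_def L_def)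
    qed
  qed
qed

end
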